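(* Let $1<p<N$, $q>0$, $\mu>0$, and $g(s)=\frac{(p-1)^{q-p+1}}{\mu^q}(1+\mu s)^{p-1}|\ln(1+\mu s)|^{q-1}\ln(1+\mu s)$ for $s>-1/\mu$. Then for every $r\in(p-1,p)$: (1) if $q\ge p-1$, there exist constants $c_0,c_1>0$ such that $|g(s)|\le c_0|s|^r+c_1|s|^{p-1}$ for all $s>-1/\mu$; (2) if $0<q<p-1$, there exist constants $c_1,c_2>0$ such that $|g(s)|\le c_1|s|^r+c_2|s|^{q}$ for all $s>-1/\mu$. *)

theory Defs
  imports Complex_Main
begin

definition gfun :: "real \<Rightarrow> real \<Rightarrow> real \<Rightarrow> real \<Rightarrow> real" where
  "gfun p q \<mu> s = ((p - 1) powr (q - p + 1) / \<mu> powr q) * (1 + \<mu> * s) powr (p - 1)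
      * \<bar>ln (1 + \<mu> * s)\<bar> powr (q - 1) * ln (1 + \<mu> * s)"

end

theory Submission imports Defs begin

lemma ln_le_powr: fixes y a :: real assumes "0 < y" "0 < a" shows "ln y \<le> y powr a / a"
proof -
  have "ln (y powr a) \<le> y powr a - 1" by (rule ln_le_minus_one) (use assms in simp)
  hence "a * ln y \<le> y powr a" using assms by (simp add: ln_powr)
  thus ?thesis using assms by (simp add: field_simps)
qed

lemma ln_small: fixes x :: real assumes "\<bar>x\<bar> \<le> 1/2" shows "\<bar>ln (1 + x)\<bar> \<le> 2 * \<bar>x\<bar>"
proof (cases "x \<ge> 0")
  case True
  then show ?thesis using ln_add_one_self_le_self[of x] ln_ge_zero[of "1+x"] by simp
next
  case False
  have t: "0 < 1 + x" "1 + x < 1" using assms False by auto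
  have "ln (1/(1+x)) \<le> 1/(1+x) - 1" by (rule ln_le_minus_one) (use t in simp)
  moreover have "ln (1/(1+x)) = - ln (1+x)" using t by (simp add: ln_div)
  moreover have "1/(1+x) - 1 \<le> 2 * \<bar>x\<bar>"
  proof -
    have "x * (1 + 2*x) \<le> 0" by (rule mult_nonpos_nonneg) (use assms False in auto)
    thus ?thesis using t False by (simp add: field_simps)
  qed
  moreover have "ln (1+x) < 0" using t by simp
  ultimately show ?thesis by simp
qed

lemma near_zero_bound: fixes t p q :: real assumes "0 < t" "t \<le> 1" "1 < p" "0 < q"
  shows "t powr (p-1) * \<bar>ln t\<bar> powr q \<le> (q/(p-1)) powr q"
proof -
  define a where "a = (p-1)/q"
  have a: "a > 0" using assms by (simp add: a_def)
  have "\<bar>ln t\<bar> = ln (1/t)" using assms by (simp add: ln_div)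
  also have "\<dots> \<le> (1/t) powr a / a" by (rule ln_le_powr) (use assms a in auto)
  finally have h: "\<bar>ln t\<bar> \<le> (1/t) powr a / a" .
  have "\<bar>ln t\<bar> powr q \<le> ((1/t) powr a / a) powr q" by (rule powr_mono2) (use assms h in auto)
  also have "\<dots> = (1/t) powr (a*q) / a powr q" using a assms by (simp add: powr_divide powr_powr powr_mult)
  also have "a*q = p - 1" using assms by (simp add: a_def)
  finally have h2: "\<bar>ln t\<bar> powr q \<le> (1/t) powr (p-1) / a powr q" .
  have "t powr (p-1) * \<bar>ln t\<bar> powr q \<le> t powr (p-1) * ((1/t) powr (p-1) / a powr q)"
    by (rule mult_left_mono[OF h2]) simp
  also have "\<dots> = 1 / a powr q" using assms by (simp add: powr_divide)
  also have "\<dots> = (q/(p-1)) powr q" using assms a by (simp add: a_def powr_divide)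
  finally show ?thesis .
qed

lemma large_bound: fixes t d q :: real assumes "1 \<le> t" "0 < d" "0 < q"
  shows "\<bar>ln t\<bar> powr q \<le> (q/d) powr q * t powr d"
proof -
  have "ln t \<le> t powr (d/q) / (d/q)" by (rule ln_le_powr) (use assms in auto)
  moreover have "t powr (d/q) / (d/q) = (q/d) * t powr (d/q)" by (simp add: field_simps)
  moreover have "ln t \<ge> 0" using assms by simp
  ultimately have h: "\<bar>ln t\<bar> \<le> (q/d) * t powr (d/q)" by (simp add: mult.commute)
  have "\<bar>ln t\<bar> powr q \<le> ((q/d) * t powr (d/q)) powr q" by (rule powr_mono2) (use assms h in auto)
  also have "\<dots> = (q/d) powr q * (t powr (d/q)) powr q" using assms by (subst powr_mult) auto
  also have "\<dots> = (q/d) powr q * t powr d" using assms by (simp add: powr_powr)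
  finally show ?thesis .
qed


lemma core:
  fixes p q m r :: real
  assumes "1 < p" "0 < q" "0 < m" "m \<le> q" "m \<le> p - 1" "p - 1 < r"
  shows "\<exists>A B. A > 0 \<and> B > 0 \<and> (\<forall>x. x > -1 \<longrightarrow>
     (1+x) powr (p-1) * \<bar>ln (1+x)\<bar> powr q \<le> A * \<bar>x\<bar> powr r + B * \<bar>x\<bar> powr m)"
proof -
  define d where "d = r - (p - 1)"
  have d: "d > 0" using assms by (simp add: d_def)
  define A where "A = 3 powr (p-1) * (q/d) powr q * 3 powr d + 1"
  define B1 where "B1 = 2 powr (p-1) * 2 powr q"
  define B2 where "B2 = (q/(p-1)) powr q * 2 powr m"
  define B where "B = B1 + B2 + 1"
  have B1: "B1 \<ge> 0" and B2: "B2 \<ge> 0" by (simp_all add: B1_def B2_def)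
  have A: "A > 0" by (simp add: A_def add_nonneg_pos)
  have Bp: "B > 0" using B1 B2 by (simp add: B_def)
  show ?thesis
  proof (intro exI conjI allI impI)
    fix x :: real assume x: "x > -1"
    define h where "h = (1+x) powr (p-1) * \<bar>ln (1+x)\<bar> powr q"
    have h0: "h \<ge> 0" by (simp add: h_def)
    have xr: "\<bar>x\<bar> powr r \<ge> 0" "\<bar>x\<bar> powr m \<ge> 0" by simp_all
    have main: "h \<le> (A - 1) * \<bar>x\<bar> powr r \<or> h \<le> B1 * \<bar>x\<bar> powr m \<or> h \<le> B2 * \<bar>x\<bar> powr m"
    proof (cases "\<bar>x\<bar> \<le> 1/2")
      case True
      have "h \<le> 2 powr (p-1) * (2 * \<bar>x\<bar>) powr q" unfolding h_def
      proof (rule mult_mono)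
        show "(1+x) powr (p-1) \<le> 2 powr (p-1)" by (rule powr_mono2) (use assms True x in auto)
        show "\<bar>ln (1+x)\<bar> powr q \<le> (2 * \<bar>x\<bar>) powr q"
          by (rule powr_mono2) (use assms ln_small[OF True] in auto)
      qed simp_all
      also have "\<dots> = B1 * \<bar>x\<bar> powr q" by (simp add: B1_def powr_mult)
      also have "\<dots> \<le> B1 * \<bar>x\<bar> powr m"
        by (rule mult_left_mono[OF powr_mono' B1]) (use assms True in auto)
      finally show ?thesis by simp
    next
      case False
      show ?thesis
      proof (cases "x < 0")
        case True
        have t: "0 < 1 + x" "1 + x \<le> 1" using x True by auto
        have "h \<le> (q/(p-1)) powr q" unfolding h_def by (rule near_zero_bound) (use t assms in auto)
        also have "\<dots> = (q/(p-1)) powr q * 2 powr m * (1/2) powr m"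
          by (simp add: powr_divide)
        also have "\<dots> \<le> B2 * \<bar>x\<bar> powr m" unfolding B2_def
          by (rule mult_left_mono[OF powr_mono2]) (use False assms in auto)
        finally show ?thesis by simp
      next
        case xn: False
        have x2: "x > 1/2" using False xn by auto
        have t1: "1 \<le> 1 + x" "1 + x \<le> 3 * x" using x2 by auto
        have "h \<le> (3*x) powr (p-1) * ((q/d) powr q * (1+x) powr d)" unfolding h_def
        proof (rule mult_mono)
          show "(1+x) powr (p-1) \<le> (3*x) powr (p-1)" by (rule powr_mono2) (use assms t1 in auto)
          show "\<bar>ln (1+x)\<bar> powr q \<le> (q/d) powr q * (1+x) powr d"
            by (rule large_bound) (use assms t1 d in auto)
        qed simp_all
        also have "\<dots> \<le> (3*x) powr (p-1) * ((q/d) powr q * (3*x) powr d)"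
          by (intro mult_left_mono powr_mono2) (use t1 d in auto)
        also have "\<dots> = 3 powr (p-1) * (q/d) powr q * 3 powr d * (x powr (p-1) * x powr d)"
          using x2 by (simp add: powr_mult)
        also have "x powr (p-1) * x powr d = \<bar>x\<bar> powr r"
          using x2 by (simp add: powr_add[symmetric] d_def)
        finally show ?thesis by (simp add: A_def)
      qed
    qed
    have "(A - 1) * \<bar>x\<bar> powr r \<le> A * \<bar>x\<bar> powr r" using xr by (simp add: algebra_simps)
    moreover have "B1 * \<bar>x\<bar> powr m \<le> B * \<bar>x\<bar> powr m" "B2 * \<bar>x\<bar> powr m \<le> B * \<bar>x\<bar> powr m"
      using xr B1 B2 by (auto simp: B_def intro!: mult_right_mono)
    moreover have "A * \<bar>x\<bar> powr r \<ge> 0" "B * \<bar>x\<bar> powr m \<ge> 0" using A Bp by simp_all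
    ultimately show "h \<le> A * \<bar>x\<bar> powr r + B * \<bar>x\<bar> powr m" using main by linarith
  qed (use A Bp in auto)
qed


lemma gfun_eq:
  fixes p q \<mu> s :: real
  assumes "0 < \<mu>"
  shows "\<bar>gfun p q \<mu> s\<bar> = ((p - 1) powr (q - p + 1) / \<mu> powr q) *
     ((1 + \<mu> * s) powr (p - 1) * \<bar>ln (1 + \<mu> * s)\<bar> powr q)"
proof (cases "ln (1 + \<mu> * s) = 0")
  case True
  then show ?thesis by (simp add: gfun_def)
next
  case False
  define L where "L = ln (1 + \<mu> * s)"
  have "\<bar>L\<bar> powr (q - 1) * \<bar>L\<bar> = \<bar>L\<bar> powr q"
  proof -
    have "\<bar>L\<bar> > 0" using False by (simp add: L_def)
    hence "\<bar>L\<bar> = \<bar>L\<bar> powr 1" by simp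
    hence "\<bar>L\<bar> powr (q - 1) * \<bar>L\<bar> = \<bar>L\<bar> powr (q - 1) * \<bar>L\<bar> powr 1" by simp
    also have "\<dots> = \<bar>L\<bar> powr (q - 1 + 1)" by (rule powr_add[symmetric])
    finally show ?thesis by simp
  qed
  moreover have "\<bar>gfun p q \<mu> s\<bar> = ((p - 1) powr (q - p + 1) / \<mu> powr q) *
     (1 + \<mu> * s) powr (p - 1) * (\<bar>L\<bar> powr (q - 1) * \<bar>L\<bar>)"
    by (simp add: gfun_def L_def abs_mult)
  ultimately show ?thesis by (simp add: L_def)
qed

lemma scaled:
  fixes p q \<mu> m r :: real
  assumes "1 < p" "0 < q" "0 < m" "m \<le> q" "m \<le> p - 1" "p - 1 < r" "0 < \<mu>"
  shows "\<exists>c0 c1. c0 > 0 \<and> c1 > 0 \<and>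
            (\<forall>s. s > -1/\<mu> \<longrightarrow> \<bar>gfun p q \<mu> s\<bar> \<le> c0 * \<bar>s\<bar> powr r + c1 * \<bar>s\<bar> powr m)"
proof -
  obtain A B where A: "A > 0" and B: "B > 0" and H: "\<And>x. x > -1 \<Longrightarrow>
     (1+x) powr (p-1) * \<bar>ln (1+x)\<bar> powr q \<le> A * \<bar>x\<bar> powr r + B * \<bar>x\<bar> powr m"
    using core[OF assms(1-6)] by blast
  define C where "C = (p - 1) powr (q - p + 1) / \<mu> powr q"
  have C: "C > 0" using assms by (simp add: C_def)
  show ?thesis
  proof (intro exI conjI allI impI)
    fix s :: real assume s: "s > -1/\<mu>"
    have x: "\<mu> * s > -1" using s assms by (simp add: field_simps)
    have "\<bar>gfun p q \<mu> s\<bar> = C * ((1 + \<mu> * s) powr (p - 1) * \<bar>ln (1 + \<mu> * s)\<bar> powr q)"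
      using gfun_eq[OF assms(7)] by (simp add: C_def)
    also have "\<dots> \<le> C * (A * \<bar>\<mu> * s\<bar> powr r + B * \<bar>\<mu> * s\<bar> powr m)"
      by (rule mult_left_mono[OF H[OF x]]) (use C in simp)
    also have "\<dots> = (C * A * \<mu> powr r) * \<bar>s\<bar> powr r + (C * B * \<mu> powr m) * \<bar>s\<bar> powr m"
      using assms by (simp add: abs_mult powr_mult algebra_simps)
    finally show "\<bar>gfun p q \<mu> s\<bar> \<le> (C * A * \<mu> powr r) * \<bar>s\<bar> powr r + (C * B * \<mu> powr m) * \<bar>s\<bar> powr m" .
  qed (use A B C assms in auto)
qed

theorem lemma2p2:
  fixes p q \<mu> r :: real and N :: nat
  assumes "1 < p" and "p < real N" and "q > 0" and "\<mu> > 0"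
    and "p - 1 < r" and "r < p"
  shows "(q \<ge> p - 1 \<longrightarrow> (\<exists>c0 c1. c0 > 0 \<and> c1 > 0 \<and>
            (\<forall>s. s > -1/\<mu> \<longrightarrow> \<bar>gfun p q \<mu> s\<bar> \<le> c0 * \<bar>s\<bar> powr r + c1 * \<bar>s\<bar> powr (p - 1))))
       \<and> (q < p - 1 \<longrightarrow> (\<exists>c1 c2. c1 > 0 \<and> c2 > 0 \<and>
            (\<forall>s. s > -1/\<mu> \<longrightarrow> \<bar>gfun p q \<mu> s\<bar> \<le> c1 * \<bar>s\<bar> powr r + c2 * \<bar>s\<bar> powr q)))"
proof (intro conjI impI)
  assume "q \<ge> p - 1"
  then show "\<exists>c0 c1. c0 > 0 \<and> c1 > 0 \<and>
            (\<forall>s. s > -1/\<mu> \<longrightarrow> \<bar>gfun p q \<mu> s\<bar> \<le> c0 * \<bar>s\<bar> powr r + c1 * \<bar>s\<bar> powr (p - 1))"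
    by (intro scaled) (use assms in auto)
next
  assume "q < p - 1"
  then show "\<exists>c1 c2. c1 > 0 \<and> c2 > 0 \<and>
            (\<forall>s. s > -1/\<mu> \<longrightarrow> \<bar>gfun p q \<mu> s\<bar> \<le> c1 * \<bar>s\<bar> powr r + c2 * \<bar>s\<bar> powr q)"
    by (intro scaled) (use assms in auto)
qed

end
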